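(* Let $\lambda$ be an infinite cardinal and $\mathcal C$ a small category with ${<}\lambda$-sequential colimits. Suppose that for each object $a$ of $\mathcal C$ we are given a set $Q_a$ with $|Q_a|\le\lambda$, each element of which is a set of morphisms that is generic above $a$. Then for every object $c$ of $\mathcal C$ there is a sequential-colimit-preserving functor $F:\lambda\to\mathcal C$ with $F(0)=c$ such that for every $\alpha<\lambda$ and every $X\in Q_{F(\alpha)}$ there is $\beta$ with $\alpha<\beta<\lambda$ and $F(\alpha\to\beta)\in X$.
   Context: An ordinal $\lambda$ is viewed as a category (a poset) with a unique morphism $\alpha\to\beta$ whenever $\alpha\le\beta$. A category $\mathcal C$ has ${<}\lambda$-sequential colimits if for every ordinal $\alpha<\lambda$ every diagram $\alpha\to\mathcal C$ has a colimit. A functor $F:\lambda\to\mathcal C$ is sequential-colimit-preserving if for every limit ordinal $\alpha<\lambda$, $F(\alpha)$ (with the morphisms $F(\beta\to\alpha)$, $\beta<\alpha$) is a colimit of the restricted diagram $F|_\alpha$. For an object $a$ of a small category $\mathcal C$, a set $X$ of morphisms with domain $a$ is generic above $a$ if for every morphism $f:a\to b$ there are an object $c$ and a morphism $g:b\to c$ with $g\circ f\in X$. *)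

theory Defs
  imports Main
begin

text \<open>A small category: a set of objects, a set of morphisms, domain, codomain,
  composition (Comp g f = g o f) and identities.\<close>

record ('o, 'm) cat =
  Obj :: "'o set"
  Mor :: "'m set"
  Dom :: "'m \<Rightarrow> 'o"
  Cod :: "'m \<Rightarrow> 'o"
  Comp :: "'m \<Rightarrow> 'm \<Rightarrow> 'm"
  Id :: "'o \<Rightarrow> 'm"

definition category :: "('o, 'm) cat \<Rightarrow> bool" where
  "category C \<longleftrightarrow>
     (\<forall>f\<in>Mor C. Dom C f \<in> Obj C \<and> Cod C f \<in> Obj C) \<and>
     (\<forall>a\<in>Obj C. Id C a \<in> Mor C \<and> Dom C (Id C a) = a \<and> Cod C (Id C a) = a) \<and>
     (\<forall>f\<in>Mor C. \<forall>g\<in>Mor C. Dom C g = Cod C f \<longrightarrow>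
         Comp C g f \<in> Mor C \<and> Dom C (Comp C g f) = Dom C f \<and> Cod C (Comp C g f) = Cod C g) \<and>
     (\<forall>f\<in>Mor C. Comp C (Id C (Cod C f)) f = f \<and> Comp C f (Id C (Dom C f)) = f) \<and>
     (\<forall>f\<in>Mor C. \<forall>g\<in>Mor C. \<forall>h\<in>Mor C. Dom C g = Cod C f \<longrightarrow> Dom C h = Cod C g \<longrightarrow>
         Comp C h (Comp C g f) = Comp C (Comp C h g) f)"

text \<open>A diagram indexed by the poset (I, r) (r an order relation, only pairs in I matter):
  object map D, morphism map M i j for i \<le> j.\<close>

definition pdiagram :: "('o, 'm) cat \<Rightarrow> 'i set \<Rightarrow> 'i rel \<Rightarrow> ('i \<Rightarrow> 'o) \<Rightarrow> ('i \<Rightarrow> 'i \<Rightarrow> 'm) \<Rightarrow> bool" where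
  "pdiagram C I r D M \<longleftrightarrow>
     (\<forall>i\<in>I. D i \<in> Obj C) \<and>
     (\<forall>i\<in>I. \<forall>j\<in>I. (i, j) \<in> r \<longrightarrow> M i j \<in> Mor C \<and> Dom C (M i j) = D i \<and> Cod C (M i j) = D j) \<and>
     (\<forall>i\<in>I. M i i = Id C (D i)) \<and>
     (\<forall>i\<in>I. \<forall>j\<in>I. \<forall>k\<in>I. (i, j) \<in> r \<longrightarrow> (j, k) \<in> r \<longrightarrow> Comp C (M j k) (M i j) = M i k)"

definition cocone :: "('o, 'm) cat \<Rightarrow> 'i set \<Rightarrow> 'i rel \<Rightarrow> ('i \<Rightarrow> 'o) \<Rightarrow> ('i \<Rightarrow> 'i \<Rightarrow> 'm)
    \<Rightarrow> 'o \<Rightarrow> ('i \<Rightarrow> 'm) \<Rightarrow> bool" where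
  "cocone C I r D M L \<iota> \<longleftrightarrow>
     L \<in> Obj C \<and>
     (\<forall>i\<in>I. \<iota> i \<in> Mor C \<and> Dom C (\<iota> i) = D i \<and> Cod C (\<iota> i) = L) \<and>
     (\<forall>i\<in>I. \<forall>j\<in>I. (i, j) \<in> r \<longrightarrow> Comp C (\<iota> j) (M i j) = \<iota> i)"

definition colimit :: "('o, 'm) cat \<Rightarrow> 'i set \<Rightarrow> 'i rel \<Rightarrow> ('i \<Rightarrow> 'o) \<Rightarrow> ('i \<Rightarrow> 'i \<Rightarrow> 'm)
    \<Rightarrow> 'o \<Rightarrow> ('i \<Rightarrow> 'm) \<Rightarrow> bool" where
  "colimit C I r D M L \<iota> \<longleftrightarrow>
     cocone C I r D M L \<iota> \<and>
     (\<forall>L' \<iota>'. cocone C I r D M L' \<iota>' \<longrightarrow>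
        (\<exists>!u. u \<in> Mor C \<and> Dom C u = L \<and> Cod C u = L' \<and> (\<forall>i\<in>I. Comp C u (\<iota> i) = \<iota>' i)))"

text \<open>Ordinals below \<lambda>: \<lambda> is given by a well-order r (a cardinal order, i.e. initial
  ordinal); the ordinal \<alpha> < \<lambda> is identified with the element \<alpha> \<in> Field r, i.e. with the
  initial segment underS r \<alpha> of its predecessors.\<close>

definition has_seq_colimits_below :: "('o, 'm) cat \<Rightarrow> 'a rel \<Rightarrow> bool" where
  "has_seq_colimits_below C r \<longleftrightarrow>
     (\<forall>\<alpha>\<in>Field r. \<forall>D M. pdiagram C (underS r \<alpha>) r D M \<longrightarrow>
        (\<exists>L \<iota>. colimit C (underS r \<alpha>) r D M L \<iota>))"

definition is_limit_elem :: "'a rel \<Rightarrow> 'a \<Rightarrow> bool" where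
  "is_limit_elem r \<alpha> \<longleftrightarrow> \<alpha> \<in> Field r \<and> underS r \<alpha> \<noteq> {} \<and>
     (\<forall>\<beta>\<in>underS r \<alpha>. \<exists>\<gamma>\<in>underS r \<alpha>. \<beta> \<in> underS r \<gamma>)"

definition seq_colim_preserving :: "('o, 'm) cat \<Rightarrow> 'a rel \<Rightarrow> ('a \<Rightarrow> 'o) \<Rightarrow> ('a \<Rightarrow> 'a \<Rightarrow> 'm) \<Rightarrow> bool" where
  "seq_colim_preserving C r Fo Fm \<longleftrightarrow>
     (\<forall>\<alpha>. is_limit_elem r \<alpha> \<longrightarrow> colimit C (underS r \<alpha>) r Fo Fm (Fo \<alpha>) (\<lambda>\<beta>. Fm \<beta> \<alpha>))"

definition generic_above :: "('o, 'm) cat \<Rightarrow> 'o \<Rightarrow> 'm set \<Rightarrow> bool" where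
  "generic_above C a X \<longleftrightarrow>
     X \<subseteq> {f \<in> Mor C. Dom C f = a} \<and>
     (\<forall>f\<in>Mor C. Dom C f = a \<longrightarrow>
        (\<exists>g\<in>Mor C. Dom C g = Cod C f \<and> Comp C g f \<in> X))"

end

theory Submission
  imports Defs
begin


lemma pdiagram_cong:
  assumes "\<forall>i\<in>I. D i = D' i" "\<forall>i\<in>I. \<forall>j\<in>I. M i j = M' i j"
  shows "pdiagram C I r D M = pdiagram C I r D' M'"
  using assms unfolding pdiagram_def by (auto simp: Ball_def)

lemma cocone_cong:
  assumes "\<forall>i\<in>I. D i = D' i" "\<forall>i\<in>I. \<forall>j\<in>I. M i j = M' i j" "\<forall>i\<in>I. \<iota> i = \<iota>' i"
  shows "cocone C I r D M L \<iota> = cocone C I r D' M' L \<iota>'"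
  using assms unfolding cocone_def by (auto simp: Ball_def)

lemma colimit_cong:
  assumes "\<forall>i\<in>I. D i = D' i" "\<forall>i\<in>I. \<forall>j\<in>I. M i j = M' i j" "\<forall>i\<in>I. \<iota> i = \<iota>' i"
  shows "colimit C I r D M L \<iota> = colimit C I r D' M' L \<iota>'"
proof -
  have "\<And>L' \<kappa>. cocone C I r D M L' \<kappa> = cocone C I r D' M' L' \<kappa>"
    using assms by (intro cocone_cong) auto
  moreover have "cocone C I r D M L \<iota> = cocone C I r D' M' L \<iota>'"
    using assms by (intro cocone_cong) auto
  moreover have "\<And>u. (\<forall>i\<in>I. Comp C u (\<iota> i) = \<kappa> i) = (\<forall>i\<in>I. Comp C u (\<iota>' i) = \<kappa> i)" for \<kappa>
    using assms by auto
  ultimately show ?thesis unfolding colimit_def by simp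
qed



locale seqcon =
  fixes C :: "('o,'m) cat" and r :: "'a rel" and Q :: "'o \<Rightarrow> 'm set set" and c :: 'o
    and task :: "'a \<Rightarrow> 'a \<times> 'a" and enum :: "'o \<Rightarrow> 'a \<Rightarrow> 'm set"
  assumes CO: "Card_order r" and INF: "infinite (Field r)" and CAT: "category C"
    and COL: "has_seq_colimits_below C r"
    and GEN: "\<forall>a\<in>Obj C. \<forall>X\<in>Q a. generic_above C a X"
    and cObj: "c \<in> Obj C"
    and ENUM: "\<And>a X. a \<in> Obj C \<Longrightarrow> X \<in> Q a \<Longrightarrow> \<exists>i\<in>Field r. enum a i = X"
    and TASK: "\<And>\<delta> i. \<delta> \<in> Field r \<Longrightarrow> i \<in> Field r \<Longrightarrow> \<exists>\<gamma>. (\<delta>,\<gamma>) \<in> r \<and> task \<gamma> = (\<delta>,i)"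
begin

lemma WO: "wo_rel r"
  using CO unfolding wo_rel_def card_order_on_def by simp

lemma trans_r: "(a,b) \<in> r \<Longrightarrow> (b,d) \<in> r \<Longrightarrow> (a,d) \<in> r"
  using wo_rel.TRANS[OF WO] unfolding trans_def by blast

lemma antisym_r: "(a,b) \<in> r \<Longrightarrow> (b,a) \<in> r \<Longrightarrow> a = b"
  using wo_rel.ANTISYM[OF WO] unfolding antisym_def by blast

lemma total_r: "a \<in> Field r \<Longrightarrow> b \<in> Field r \<Longrightarrow> (a,b) \<in> r \<or> (b,a) \<in> r"
  using wo_rel.TOTALS[OF WO] by blast

lemma refl_r: "a \<in> Field r \<Longrightarrow> (a,a) \<in> r"
  using wo_rel.REFL[OF WO] unfolding refl_on_def by blast

lemma fieldI1: "(a,b) \<in> r \<Longrightarrow> a \<in> Field r" and fieldI2: "(a,b) \<in> r \<Longrightarrow> b \<in> Field r"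
  by (auto simp: Field_def)

lemma cat_dom_cod: "f \<in> Mor C \<Longrightarrow> Dom C f \<in> Obj C \<and> Cod C f \<in> Obj C"
  using CAT unfolding category_def by blast
lemma cat_id: "a \<in> Obj C \<Longrightarrow> Id C a \<in> Mor C \<and> Dom C (Id C a) = a \<and> Cod C (Id C a) = a"
  using CAT unfolding category_def by blast
lemma cat_comp: "f \<in> Mor C \<Longrightarrow> g \<in> Mor C \<Longrightarrow> Dom C g = Cod C f \<Longrightarrow>
         Comp C g f \<in> Mor C \<and> Dom C (Comp C g f) = Dom C f \<and> Cod C (Comp C g f) = Cod C g"
  using CAT unfolding category_def by blast
lemma cat_idl: "f \<in> Mor C \<Longrightarrow> Comp C (Id C (Cod C f)) f = f"
  using CAT unfolding category_def by blast
lemma cat_idr: "f \<in> Mor C \<Longrightarrow> Comp C f (Id C (Dom C f)) = f"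
  using CAT unfolding category_def by blast
lemma cat_assoc: "f \<in> Mor C \<Longrightarrow> g \<in> Mor C \<Longrightarrow> h \<in> Mor C \<Longrightarrow> Dom C g = Cod C f \<Longrightarrow> Dom C h = Cod C g \<Longrightarrow>
         Comp C h (Comp C g f) = Comp C (Comp C h g) f"
  using CAT unfolding category_def by blast

definition restrU :: "'a \<Rightarrow> ('a \<Rightarrow> 'b) \<Rightarrow> 'a \<Rightarrow> 'b" where
  "restrU \<alpha> f = (\<lambda>\<beta>. if \<beta> \<in> underS r \<alpha> then f \<beta> else undefined)"

definition succP :: "'a \<Rightarrow> 'a \<Rightarrow> bool" where
  "succP \<alpha> \<gamma> \<longleftrightarrow> \<gamma> \<in> underS r \<alpha> \<and> (\<forall>\<beta>\<in>underS r \<alpha>. (\<beta>,\<gamma>) \<in> r)"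

definition gP :: "('a \<Rightarrow> 'o \<times> ('a \<Rightarrow> 'm)) \<Rightarrow> 'a \<Rightarrow> 'm \<Rightarrow> bool" where
  "gP f \<gamma> g \<longleftrightarrow> g \<in> Mor C \<and> Dom C g = Cod C (snd (f \<gamma>) (fst (task \<gamma>))) \<and>
      Comp C g (snd (f \<gamma>) (fst (task \<gamma>))) \<in> enum (fst (f (fst (task \<gamma>)))) (snd (task \<gamma>))"

definition gsel :: "('a \<Rightarrow> 'o \<times> ('a \<Rightarrow> 'm)) \<Rightarrow> 'a \<Rightarrow> 'm" where
  "gsel f \<gamma> = (if (fst (task \<gamma>), \<gamma>) \<in> r \<and> (\<exists>g. gP f \<gamma> g) then (SOME g. gP f \<gamma> g) else Id C (fst (f \<gamma>)))"

definition colP :: "('a \<Rightarrow> 'o \<times> ('a \<Rightarrow> 'm)) \<Rightarrow> 'a \<Rightarrow> 'o \<times> ('a \<Rightarrow> 'm) \<Rightarrow> bool" where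
  "colP f \<alpha> LI \<longleftrightarrow> colimit C (underS r \<alpha>) r (\<lambda>\<beta>. fst (f \<beta>)) (\<lambda>\<beta> \<beta>'. snd (f \<beta>') \<beta>) (fst LI) (snd LI)"

definition H0 :: "('a \<Rightarrow> 'o \<times> ('a \<Rightarrow> 'm)) \<Rightarrow> 'a \<Rightarrow> 'o \<times> ('a \<Rightarrow> 'm)" where
  "H0 f \<alpha> = (if underS r \<alpha> = {} then (c, \<lambda>\<beta>. Id C c)
     else if (\<exists>\<gamma>. succP \<alpha> \<gamma>) then
       (let \<gamma> = (SOME \<gamma>. succP \<alpha> \<gamma>); g = gsel f \<gamma>
        in (Cod C g, \<lambda>\<beta>. if \<beta> = \<alpha> then Id C (Cod C g) else Comp C g (snd (f \<gamma>) \<beta>)))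
     else (let LI = (SOME LI. colP f \<alpha> LI) in (fst LI, \<lambda>\<beta>. if \<beta> = \<alpha> then Id C (fst LI) else snd LI \<beta>)))"

definition H :: "('a \<Rightarrow> 'o \<times> ('a \<Rightarrow> 'm)) \<Rightarrow> 'a \<Rightarrow> 'o \<times> ('a \<Rightarrow> 'm)" where
  "H f \<alpha> = H0 (restrU \<alpha> f) \<alpha>"

definition W where "W = wo_rel.worec r H"

lemma adm: "wo_rel.adm_wo r H"
proof -
  have "restrU x f = restrU x g" if "\<forall>y\<in>underS r x. f y = g y" for f g :: "'a \<Rightarrow> 'o \<times> ('a \<Rightarrow> 'm)" and x
    using that unfolding restrU_def by auto
  then show ?thesis unfolding wo_rel.adm_wo_def[OF WO] H_def by metis
qed

lemma W_eq: "W \<alpha> = H0 (restrU \<alpha> W) \<alpha>"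
  using wo_rel.worec_fixpoint[OF WO adm] unfolding W_def H_def by metis

definition Fo where "Fo \<alpha> = fst (W \<alpha>)"
definition Fm where "Fm \<beta> \<alpha> = snd (W \<alpha>) \<beta>"

lemma succP_unique: "succP \<alpha> \<gamma> \<Longrightarrow> succP \<alpha> \<gamma>' \<Longrightarrow> \<gamma> = \<gamma>'"
  unfolding succP_def using antisym_r by blast

lemma W_base: "underS r \<alpha> = {} \<Longrightarrow> Fo \<alpha> = c \<and> (\<forall>\<beta>. Fm \<beta> \<alpha> = Id C c)"
  unfolding Fo_def Fm_def by (subst (1 2) W_eq) (simp add: H0_def)

lemma W_succ:
  assumes "succP \<alpha> \<gamma>"
  shows "Fo \<alpha> = Cod C (gsel (restrU \<alpha> W) \<gamma>) \<and>
         (\<forall>\<beta>. Fm \<beta> \<alpha> = (if \<beta> = \<alpha> then Id C (Fo \<alpha>) else Comp C (gsel (restrU \<alpha> W) \<gamma>) (Fm \<beta> \<gamma>)))"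
proof -
  have ne: "underS r \<alpha> \<noteq> {}" using assms unfolding succP_def by auto
  have s: "(SOME \<gamma>. succP \<alpha> \<gamma>) = \<gamma>" using assms succP_unique by blast
  have g: "restrU \<alpha> W \<gamma> = W \<gamma>" using assms unfolding succP_def restrU_def by auto
  show ?thesis unfolding Fo_def Fm_def
    by (subst (1 2 3) W_eq) (use ne s g assms in \<open>auto simp add: H0_def Let_def\<close>)
qed

lemma W_lim:
  assumes "underS r \<alpha> \<noteq> {}" "\<not> (\<exists>\<gamma>. succP \<alpha> \<gamma>)"
  shows "Fo \<alpha> = fst (SOME LI. colP (restrU \<alpha> W) \<alpha> LI) \<and>
         (\<forall>\<beta>. Fm \<beta> \<alpha> = (if \<beta> = \<alpha> then Id C (Fo \<alpha>) else snd (SOME LI. colP (restrU \<alpha> W) \<alpha> LI) \<beta>))"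
  unfolding Fo_def Fm_def
  by (subst (1 2 3) W_eq) (use assms in \<open>auto simp add: H0_def Let_def\<close>)

end


context seqcon
begin

definition invar where
  "invar \<alpha> \<longleftrightarrow> Fo \<alpha> \<in> Obj C \<and> Fm \<alpha> \<alpha> = Id C (Fo \<alpha>) \<and>
    (\<forall>\<beta>. (\<beta>,\<alpha>) \<in> r \<longrightarrow> Fm \<beta> \<alpha> \<in> Mor C \<and> Dom C (Fm \<beta> \<alpha>) = Fo \<beta> \<and> Cod C (Fm \<beta> \<alpha>) = Fo \<alpha>) \<and>
    (\<forall>\<beta> \<delta>. (\<beta>,\<delta>) \<in> r \<longrightarrow> (\<delta>,\<alpha>) \<in> r \<longrightarrow> Comp C (Fm \<delta> \<alpha>) (Fm \<beta> \<delta>) = Fm \<beta> \<alpha>)"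

lemma underS_field: "\<beta> \<in> underS r \<alpha> \<Longrightarrow> \<alpha> \<in> Field r \<and> \<beta> \<in> Field r"
  unfolding underS_def by (auto simp: Field_def)

lemma pdiag_under:
  assumes "\<forall>\<beta>\<in>underS r \<alpha>. invar \<beta>"
  shows "pdiagram C (underS r \<alpha>) r Fo Fm"
  using assms unfolding pdiagram_def invar_def by blast

lemma lim_case:
  assumes ne: "underS r \<alpha> \<noteq> {}" and ns: "\<not> (\<exists>\<gamma>. succP \<alpha> \<gamma>)" and IH: "\<forall>\<beta>\<in>underS r \<alpha>. invar \<beta>"
  shows "colimit C (underS r \<alpha>) r Fo Fm (Fo \<alpha>) (\<lambda>\<beta>. Fm \<beta> \<alpha>) \<and> Fm \<alpha> \<alpha> = Id C (Fo \<alpha>)"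
proof -
  have aF: "\<alpha> \<in> Field r" using ne underS_field by blast
  obtain L \<iota> where col: "colimit C (underS r \<alpha>) r Fo Fm L \<iota>"
    using COL pdiag_under[OF IH] aF unfolding has_seq_colimits_below_def by blast
  have eqs: "\<forall>i\<in>underS r \<alpha>. fst (restrU \<alpha> W i) = Fo i"
            "\<forall>i\<in>underS r \<alpha>. \<forall>j\<in>underS r \<alpha>. snd (restrU \<alpha> W j) i = Fm i j"
    unfolding restrU_def Fo_def Fm_def by auto
  have "colP (restrU \<alpha> W) \<alpha> (L, \<iota>)"
    unfolding colP_def using col colimit_cong[OF eqs, of \<iota> \<iota> C r L] by simp
  then have "colP (restrU \<alpha> W) \<alpha> (SOME LI. colP (restrU \<alpha> W) \<alpha> LI)" by (rule someI)
  define LI where "LI = (SOME LI. colP (restrU \<alpha> W) \<alpha> LI)"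
  have cLI: "colP (restrU \<alpha> W) \<alpha> LI" unfolding LI_def by fact
  have c2: "colimit C (underS r \<alpha>) r Fo Fm (fst LI) (snd LI)"
    using cLI colimit_cong[OF eqs, of "snd LI" "snd LI" C r] unfolding colP_def by simp
  have w: "Fo \<alpha> = fst LI"
    "\<forall>\<beta>. Fm \<beta> \<alpha> = (if \<beta> = \<alpha> then Id C (Fo \<alpha>) else snd LI \<beta>)"
    using W_lim[OF ne ns] unfolding LI_def by auto
  have "\<forall>i\<in>underS r \<alpha>. Fm i \<alpha> = snd LI i"
    using w(2) unfolding underS_def by auto
  then have "colimit C (underS r \<alpha>) r Fo Fm (Fo \<alpha>) (\<lambda>\<beta>. Fm \<beta> \<alpha>)"
    using c2 colimit_cong[of "underS r \<alpha>" Fo Fo Fm Fm "\<lambda>\<beta>. Fm \<beta> \<alpha>" "snd LI" C r "fst LI"] w(1) by simp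
  then show ?thesis using w(2) by simp
qed

end


context seqcon
begin

lemma invar_mor: "invar \<alpha> \<Longrightarrow> (\<beta>,\<alpha>) \<in> r \<Longrightarrow> Fm \<beta> \<alpha> \<in> Mor C \<and> Dom C (Fm \<beta> \<alpha>) = Fo \<beta> \<and> Cod C (Fm \<beta> \<alpha>) = Fo \<alpha>"
  unfolding invar_def by blast

lemma gsel_mor:
  assumes s: "succP \<alpha> \<gamma>" and IH: "invar \<gamma>"
  shows "gsel (restrU \<alpha> W) \<gamma> \<in> Mor C \<and> Dom C (gsel (restrU \<alpha> W) \<gamma>) = Fo \<gamma>"
proof -
  have g: "restrU \<alpha> W \<gamma> = W \<gamma>" using s unfolding succP_def restrU_def by auto
  show ?thesis
  proof (cases "(fst (task \<gamma>), \<gamma>) \<in> r \<and> (\<exists>g. gP (restrU \<alpha> W) \<gamma> g)")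
    case True
    then have "gP (restrU \<alpha> W) \<gamma> (SOME g. gP (restrU \<alpha> W) \<gamma> g)" using someI_ex by metis
    moreover have "Cod C (snd (restrU \<alpha> W \<gamma>) (fst (task \<gamma>))) = Fo \<gamma>"
      using invar_mor[OF IH, of "fst (task \<gamma>)"] True g unfolding Fm_def by simp
    ultimately show ?thesis using True unfolding gsel_def gP_def by simp
  next
    case False
    then have "gsel (restrU \<alpha> W) \<gamma> = Id C (Fo \<gamma>)" unfolding gsel_def Fo_def using g by auto
    then show ?thesis using IH cat_id unfolding invar_def by simp
  qed
qed

lemma invar_all: "invar \<alpha>"
proof (induct rule: wo_rel.well_order_induct[OF WO])
  case (1 x)
  then have IH: "\<forall>y\<in>underS r x. invar y" unfolding underS_def by blast
  show ?case
  proof (cases "underS r x = {}")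
    case True
    note b = W_base[OF True]
    have eq: "(\<beta>,x) \<in> r \<Longrightarrow> \<beta> = x" for \<beta> using True unfolding underS_def by blast
    show ?thesis unfolding invar_def
      using b cObj cat_id[OF cObj] cat_idl[of "Id C c"] eq by metis
  next
    case ne: False
    show ?thesis
    proof (cases "\<exists>\<gamma>. succP x \<gamma>")
      case True
      then obtain \<gamma> where s: "succP x \<gamma>" by blast
      have gu: "\<gamma> \<in> underS r x" and mx: "\<forall>\<beta>\<in>underS r x. (\<beta>,\<gamma>) \<in> r" using s unfolding succP_def by auto
      have IHg: "invar \<gamma>" using IH gu by blast
      define g where "g = gsel (restrU x W) \<gamma>"
      have gm: "g \<in> Mor C" "Dom C g = Fo \<gamma>" using gsel_mor[OF s IHg] unfolding g_def by auto
      have w: "Fo x = Cod C g" "\<And>\<beta>. Fm \<beta> x = (if \<beta> = x then Id C (Fo x) else Comp C g (Fm \<beta> \<gamma>))"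
        using W_succ[OF s] unfolding g_def by auto
      have objx: "Fo x \<in> Obj C" using w(1) cat_dom_cod[OF gm(1)] by simp
      have below: "(\<beta>,x) \<in> r \<Longrightarrow> \<beta> \<noteq> x \<Longrightarrow> (\<beta>,\<gamma>) \<in> r" for \<beta> using mx unfolding underS_def by blast
      have mor: "Fm \<beta> x \<in> Mor C \<and> Dom C (Fm \<beta> x) = Fo \<beta> \<and> Cod C (Fm \<beta> x) = Fo x" if "(\<beta>,x) \<in> r" for \<beta>
      proof (cases "\<beta> = x")
        case True then show ?thesis using w(2) cat_id[OF objx] by simp
      next
        case False
        have "(\<beta>,\<gamma>) \<in> r" using below that False by blast
        then have "Fm \<beta> \<gamma> \<in> Mor C \<and> Dom C (Fm \<beta> \<gamma>) = Fo \<beta> \<and> Cod C (Fm \<beta> \<gamma>) = Fo \<gamma>" using invar_mor[OF IHg] by blast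
        then show ?thesis using w False cat_comp[of "Fm \<beta> \<gamma>" g] gm by simp
      qed
      have comp: "Comp C (Fm \<delta> x) (Fm \<beta> \<delta>) = Fm \<beta> x" if bd: "(\<beta>,\<delta>) \<in> r" and dx: "(\<delta>,x) \<in> r" for \<beta> \<delta>
      proof (cases "\<delta> = x")
        case True
        then show ?thesis using w(2)[of x] mor[of \<beta>] cat_idl[of "Fm \<beta> x"] bd by simp
      next
        case False
        have bx: "\<beta> \<noteq> x" using False bd dx antisym_r by blast
        have dg: "(\<delta>,\<gamma>) \<in> r" using below dx False by blast
        have bg: "(\<beta>,\<gamma>) \<in> r" using trans_r[OF bd dg] .
        have IHd: "invar \<delta>" using IH dx False unfolding underS_def by blast
        have m1: "Fm \<delta> \<gamma> \<in> Mor C \<and> Dom C (Fm \<delta> \<gamma>) = Fo \<delta> \<and> Cod C (Fm \<delta> \<gamma>) = Fo \<gamma>" using invar_mor[OF IHg dg] .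
        have m2: "Fm \<beta> \<delta> \<in> Mor C \<and> Dom C (Fm \<beta> \<delta>) = Fo \<beta> \<and> Cod C (Fm \<beta> \<delta>) = Fo \<delta>" using invar_mor[OF IHd bd] .
        have "Comp C (Fm \<delta> x) (Fm \<beta> \<delta>) = Comp C (Comp C g (Fm \<delta> \<gamma>)) (Fm \<beta> \<delta>)" using w(2) False by simp
        also have "\<dots> = Comp C g (Comp C (Fm \<delta> \<gamma>) (Fm \<beta> \<delta>))"
          using cat_assoc[of "Fm \<beta> \<delta>" "Fm \<delta> \<gamma>" g] m1 m2 gm by simp
        also have "\<dots> = Comp C g (Fm \<beta> \<gamma>)" using IHg bd dg unfolding invar_def by simp
        also have "\<dots> = Fm \<beta> x" using w(2) bx by simp
        finally show ?thesis .
      qed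
      show ?thesis unfolding invar_def using objx w(2) mor comp by simp
    next
      case False
      note L = lim_case[OF ne False IH]
      have coc: "cocone C (underS r x) r Fo Fm (Fo x) (\<lambda>\<beta>. Fm \<beta> x)" using L unfolding colimit_def by blast
      have objx: "Fo x \<in> Obj C" using coc unfolding cocone_def by blast
      have mor: "Fm \<beta> x \<in> Mor C \<and> Dom C (Fm \<beta> x) = Fo \<beta> \<and> Cod C (Fm \<beta> x) = Fo x" if "(\<beta>,x) \<in> r" for \<beta>
      proof (cases "\<beta> = x")
        case True then show ?thesis using L cat_id[OF objx] by simp
      next
        case False
        then have "\<beta> \<in> underS r x" using that unfolding underS_def by blast
        then show ?thesis using coc unfolding cocone_def by blast
      qed
      have comp: "Comp C (Fm \<delta> x) (Fm \<beta> \<delta>) = Fm \<beta> x" if bd: "(\<beta>,\<delta>) \<in> r" and dx: "(\<delta>,x) \<in> r" for \<beta> \<delta>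
      proof (cases "\<delta> = x")
        case True
        then show ?thesis using L mor[of \<beta>] cat_idl[of "Fm \<beta> x"] bd by simp
      next
        case False
        have bx: "\<beta> \<noteq> x" using False bd dx antisym_r by blast
        have "\<delta> \<in> underS r x" using False dx unfolding underS_def by blast
        moreover have "\<beta> \<in> underS r x" using bx trans_r[OF bd dx] unfolding underS_def by blast
        ultimately show ?thesis using coc bd unfolding cocone_def by blast
      qed
      show ?thesis unfolding invar_def using objx L mor comp by simp
    qed
  qed
qed

end


context seqcon
begin

lemma final:
  "pdiagram C (Field r) r Fo Fm \<and>
           (\<forall>z\<in>Field r. (\<forall>\<beta>\<in>Field r. (z, \<beta>) \<in> r) \<longrightarrow> Fo z = c) \<and>
           seq_colim_preserving C r Fo Fm \<and>
           (\<forall>\<alpha>\<in>Field r. \<forall>X\<in>Q (Fo \<alpha>). \<exists>\<beta>\<in>Field r. \<alpha> \<noteq> \<beta> \<and> (\<alpha>, \<beta>) \<in> r \<and> Fm \<alpha> \<beta> \<in> X)"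
proof (intro conjI)
  show "pdiagram C (Field r) r Fo Fm"
    using invar_all unfolding pdiagram_def invar_def by blast
  show "\<forall>z\<in>Field r. (\<forall>\<beta>\<in>Field r. (z, \<beta>) \<in> r) \<longrightarrow> Fo z = c"
  proof (intro ballI impI)
    fix z assume "z \<in> Field r" "\<forall>\<beta>\<in>Field r. (z, \<beta>) \<in> r"
    then have "underS r z = {}" unfolding underS_def using antisym_r fieldI1 by blast
    then show "Fo z = c" using W_base by blast
  qed
  show "seq_colim_preserving C r Fo Fm"
    unfolding seq_colim_preserving_def
  proof (intro allI impI)
    fix \<alpha> assume lim: "is_limit_elem r \<alpha>"
    then have ne: "underS r \<alpha> \<noteq> {}" unfolding is_limit_elem_def by blast
    have ns: "\<not> (\<exists>\<gamma>. succP \<alpha> \<gamma>)"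
    proof
      assume "\<exists>\<gamma>. succP \<alpha> \<gamma>"
      then obtain \<gamma> where g: "\<gamma> \<in> underS r \<alpha>" "\<forall>\<beta>\<in>underS r \<alpha>. (\<beta>,\<gamma>) \<in> r" unfolding succP_def by blast
      then obtain \<gamma>' where "\<gamma>' \<in> underS r \<alpha>" "\<gamma> \<in> underS r \<gamma>'" using lim unfolding is_limit_elem_def by blast
      then show False using g antisym_r unfolding underS_def by blast
    qed
    show "colimit C (underS r \<alpha>) r Fo Fm (Fo \<alpha>) (\<lambda>\<beta>. Fm \<beta> \<alpha>)"
      using lim_case[OF ne ns] invar_all by blast
  qed
  show "\<forall>\<alpha>\<in>Field r. \<forall>X\<in>Q (Fo \<alpha>). \<exists>\<beta>\<in>Field r. \<alpha> \<noteq> \<beta> \<and> (\<alpha>, \<beta>) \<in> r \<and> Fm \<alpha> \<beta> \<in> X"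
  proof (intro ballI)
    fix \<alpha> X assume aF: "\<alpha> \<in> Field r" and XQ: "X \<in> Q (Fo \<alpha>)"
    have oa: "Fo \<alpha> \<in> Obj C" using invar_all unfolding invar_def by blast
    obtain i where iF: "i \<in> Field r" and ei: "enum (Fo \<alpha>) i = X" using ENUM[OF oa XQ] by blast
    obtain \<gamma> where ag: "(\<alpha>,\<gamma>) \<in> r" and tg: "task \<gamma> = (\<alpha>,i)" using TASK[OF aF iF] by blast
    have gF: "\<gamma> \<in> Field r" using fieldI2[OF ag] .
    have sub: "{\<gamma>} \<subseteq> Field r" using gF by simp
    have AS: "AboveS r {\<gamma>} \<noteq> {}"
      using infinite_Card_order_limit[OF CO INF gF] unfolding AboveS_def by blast
    define \<alpha>' where "\<alpha>' = wo_rel.suc r {\<gamma>}"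
    have a'1: "\<alpha>' \<noteq> \<gamma> \<and> (\<gamma>,\<alpha>') \<in> r" using wo_rel.suc_greater[OF WO sub AS] unfolding \<alpha>'_def by simp
    have a'F: "\<alpha>' \<in> Field r" using wo_rel.suc_inField[OF WO sub AS] unfolding \<alpha>'_def by simp
    have s: "succP \<alpha>' \<gamma>" unfolding succP_def
    proof
      show "\<gamma> \<in> underS r \<alpha>'" using a'1 unfolding underS_def by blast
      show "\<forall>\<beta>\<in>underS r \<alpha>'. (\<beta>, \<gamma>) \<in> r"
      proof
        fix \<beta> assume b: "\<beta> \<in> underS r \<alpha>'"
        show "(\<beta>, \<gamma>) \<in> r"
        proof (rule ccontr)
          assume nb: "(\<beta>, \<gamma>) \<notin> r"
          have bF: "\<beta> \<in> Field r" using b underS_field by blast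
          have "(\<gamma>,\<beta>) \<in> r" "\<beta> \<noteq> \<gamma>" using total_r[OF bF gF] nb refl_r[OF gF] by auto
          then have "\<beta> \<in> AboveS r {\<gamma>}" using bF unfolding AboveS_def by blast
          then have "(\<alpha>',\<beta>) \<in> r" using wo_rel.suc_least_AboveS[OF WO] unfolding \<alpha>'_def by blast
          then show False using b antisym_r unfolding underS_def by blast
        qed
      qed
    qed
    have aa': "\<alpha> \<noteq> \<alpha>'" using a'1 ag antisym_r by blast
    have aa'r: "(\<alpha>,\<alpha>') \<in> r" using trans_r[OF ag] a'1 by blast
    have ru: "restrU \<alpha>' W \<gamma> = W \<gamma>" "restrU \<alpha>' W \<alpha> = W \<alpha>"
      using a'1 aa' aa'r unfolding restrU_def underS_def by auto
    define g where "g = gsel (restrU \<alpha>' W) \<gamma>"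
    have w: "Fm \<alpha> \<alpha>' = Comp C g (Fm \<alpha> \<gamma>)" using W_succ[OF s] aa' unfolding g_def by simp
    have mg: "Fm \<alpha> \<gamma> \<in> Mor C \<and> Dom C (Fm \<alpha> \<gamma>) = Fo \<alpha>" using invar_mor[OF invar_all ag] by blast
    have gP_iff: "gP (restrU \<alpha>' W) \<gamma> h \<longleftrightarrow> h \<in> Mor C \<and> Dom C h = Cod C (Fm \<alpha> \<gamma>) \<and> Comp C h (Fm \<alpha> \<gamma>) \<in> X" for h
      unfolding gP_def tg using ru ei unfolding Fm_def Fo_def by simp
    have "generic_above C (Fo \<alpha>) X" using GEN oa XQ by blast
    then obtain h where "h \<in> Mor C \<and> Dom C h = Cod C (Fm \<alpha> \<gamma>) \<and> Comp C h (Fm \<alpha> \<gamma>) \<in> X"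
      using mg unfolding generic_above_def by blast
    then have ex: "\<exists>h. gP (restrU \<alpha>' W) \<gamma> h" using gP_iff by blast
    then have "gP (restrU \<alpha>' W) \<gamma> g" unfolding g_def gsel_def using tg ag someI_ex[OF ex] by simp
    then have "Fm \<alpha> \<alpha>' \<in> X" using gP_iff w by simp
    then show "\<exists>\<beta>\<in>Field r. \<alpha> \<noteq> \<beta> \<and> (\<alpha>, \<beta>) \<in> r \<and> Fm \<alpha> \<beta> \<in> X" using a'F aa' aa'r by blast
  qed
qed

end


theorem proposition3p3:
  fixes C :: "('o, 'm) cat" and r :: "'a rel" and Q :: "'o \<Rightarrow> 'm set set" and c :: 'o
  assumes "Card_order r" and "infinite (Field r)"
    and "category C"
    and "has_seq_colimits_below C r"
    and "\<forall>a\<in>Obj C. (card_of (Q a), r) \<in> ordLeq"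
    and "\<forall>a\<in>Obj C. \<forall>X\<in>Q a. generic_above C a X"
    and "c \<in> Obj C"
  shows "\<exists>Fo Fm. pdiagram C (Field r) r Fo Fm \<and>
           (\<forall>z\<in>Field r. (\<forall>\<beta>\<in>Field r. (z, \<beta>) \<in> r) \<longrightarrow> Fo z = c) \<and>
           seq_colim_preserving C r Fo Fm \<and>
           (\<forall>\<alpha>\<in>Field r. \<forall>X\<in>Q (Fo \<alpha>). \<exists>\<beta>\<in>Field r. \<alpha> \<noteq> \<beta> \<and> (\<alpha>, \<beta>) \<in> r \<and> Fm \<alpha> \<beta> \<in> X)"
proof -
  note CO = assms(1) and INF = assms(2)
  let ?F = "Field r"
  have WO': "wo_rel r" using CO unfolding wo_rel_def card_order_on_def by simp
  have Fr: "(card_of ?F, r) \<in> ordIso" using card_of_Field_ordIso[OF CO] .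
  have rF: "(r, card_of ?F) \<in> ordIso" using ordIso_symmetric[OF Fr] .
  define inj where "inj a = (SOME f. inj_on f (Q a) \<and> f ` Q a \<subseteq> ?F)" for a
  define enum where "enum a = inv_into (Q a) (inj a)" for a
  have ENUM: "\<exists>i\<in>?F. enum a i = X" if a: "a \<in> Obj C" and X: "X \<in> Q a" for a X
  proof -
    have "(card_of (Q a), card_of ?F) \<in> ordLeq" using ordLeq_ordIso_trans[OF _ rF] assms(5) a by blast
    then have "\<exists>f. inj_on f (Q a) \<and> f ` Q a \<subseteq> ?F" using card_of_ordLeq by blast
    then have i: "inj_on (inj a) (Q a) \<and> inj a ` Q a \<subseteq> ?F" unfolding inj_def by (rule someI_ex)
    then show ?thesis using X unfolding enum_def by (intro bexI[of _ "inj a X"]) auto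
  qed
  have "(card_of (?F \<times> ?F), card_of ?F) \<in> ordIso" using card_of_Times_same_infinite INF by blast
  then obtain b where b: "bij_betw b (?F \<times> ?F) ?F" using card_of_ordIso by blast
  define binv where "binv = inv_into (?F \<times> ?F) b"
  have binv: "x \<in> ?F \<Longrightarrow> y \<in> ?F \<Longrightarrow> binv (b (x,y)) = (x,y)" for x y
    using b unfolding binv_def bij_betw_def by (simp add: inv_into_f_f)
  have bF: "x \<in> ?F \<Longrightarrow> y \<in> ?F \<Longrightarrow> b (x,y) \<in> ?F" for x y using b unfolding bij_betw_def by blast
  have binj: "inj_on b (?F \<times> ?F)" using b unfolding bij_betw_def by blast
  define task where "task \<gamma> = (fst (binv \<gamma>), fst (binv (snd (binv \<gamma>))))" for \<gamma>
  have TASK: "\<exists>\<gamma>. (\<delta>,\<gamma>) \<in> r \<and> task \<gamma> = (\<delta>,i)" if d: "\<delta> \<in> ?F" and i: "i \<in> ?F" for \<delta> i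
  proof -
    have tk: "task (b (\<delta>, b (i,j))) = (\<delta>,i)" if "j \<in> ?F" for j
      unfolding task_def using binv bF d i that by simp
    have "\<exists>j\<in>?F. (\<delta>, b (\<delta>, b (i,j))) \<in> r"
    proof (rule ccontr)
      assume nt: "\<not> ?thesis"
      have sub: "(\<lambda>j. b (\<delta>, b (i,j))) ` ?F \<subseteq> underS r \<delta>"
      proof
        fix x assume "x \<in> (\<lambda>j. b (\<delta>, b (i,j))) ` ?F"
        then obtain j where j: "j \<in> ?F" "x = b (\<delta>, b (i,j))" by blast
        have xF: "x \<in> ?F" using j bF d i by simp
        have "(\<delta>, x) \<notin> r" using j nt by blast
        moreover have "(\<delta>,\<delta>) \<in> r" using WO' d unfolding wo_rel_def
          by (meson wo_rel.REFL[OF WO'] refl_onD)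
        moreover have "(\<delta>,x) \<in> r \<or> (x,\<delta>) \<in> r" using wo_rel.TOTALS[OF WO'] d xF by blast
        ultimately show "x \<in> underS r \<delta>" unfolding underS_def by auto
      qed
      have injj: "inj_on (\<lambda>j. b (\<delta>, b (i,j))) ?F"
      proof
        fix x y assume "x \<in> ?F" "y \<in> ?F" "b (\<delta>, b (i,x)) = b (\<delta>, b (i,y))"
        then show "x = y" using binj d i bF unfolding inj_on_def by (metis Pair_inject SigmaI)
      qed
      have "(card_of ?F, card_of (underS r \<delta>)) \<in> ordLeq"
        using card_of_ordLeq injj sub by blast
      moreover have "(card_of (underS r \<delta>), r) \<in> ordLess" using card_of_underS[OF CO d] .
      ultimately have "(card_of ?F, r) \<in> ordLess" using ordLeq_ordLess_trans by blast
      then show False using Fr not_ordLess_ordIso by blast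
    qed
    then show ?thesis using tk by blast
  qed
  interpret seqcon C r Q c task enum
    using assms ENUM TASK by unfold_locales auto
  show ?thesis using final by blast
qed


end
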